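(* There is a bijection between zero-dimensional tropical ideals of degree $2$ in $\mathbb{B}[x_1^{\pm1},\dots,x_n^{\pm1}]$ and proper sublattices $L\subsetneq\mathbb{Z}^n$. Under this bijection, the tropical ideal associated to $L$ is the one whose polynomials of minimal support are exactly the binomials $\mathbf x^{\mathbf u}\oplus\mathbf x^{\mathbf v}$ with $\mathbf u\neq\mathbf v$ and $\mathbf u-\mathbf v\in L$, and the trinomials $\mathbf x^{\mathbf u}\oplus\mathbf x^{\mathbf v}\oplus\mathbf x^{\mathbf w}$ with $\mathbf u,\mathbf v,\mathbf w$ distinct and no pairwise difference of $\mathbf u,\mathbf v,\mathbf w$ lying in $L$.
   Context: $\mathbb{B}=\{\infty,0\}$ with $\oplus=\min$ and multiplication $+$. For $f=\bigoplus c_{\mathbf u}\mathbf x^{\mathbf u}$, $\operatorname{supp}(f)=\{\mathbf u:c_{\mathbf u}\ne\infty\}$. An ideal $I\subset\mathbb{B}[x_1^{\pm1},\dots,x_n^{\pm1}]$ is a tropical ideal if for all $f,g\in I$ and $\mathbf u\in\operatorname{supp}(f)\cap\operatorname{supp}(g)$ there is $h\in I$ with $\operatorname{supp}(f)\Delta\operatorname{supp}(g)\subset\operatorname{supp}(h)\subset(\operatorname{supp}(f)\cup\operatorname{supp}(g))\setminus\{\mathbf u\}$. Its underlying matroid on $\mathbb{Z}^n$ has as independent sets those containing no support of a polynomial of $I$ (circuits = minimal supports). $I$ is zero-dimensional of degree $r$ iff this matroid has finite rank $r$ (equivalent to the Hilbert-polynomial definition). A polynomial of minimal support is one whose support is a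 circuit of the underlying matroid. *)

theory Defs
  imports "HOL-Analysis.Analysis"
begin

text \<open>A Laurent polynomial over the
Boolean semifield B = {inf, 0} is determined by its support (every coefficient is 0 or inf),
so we represent a polynomial by its support, a finite subset of Z^n.  The zero polynomial
(all coefficients inf) is the empty set.\<close>

type_synonym 'n bpoly = "(int ^ 'n) set"

definition supp :: "('n::finite) bpoly \<Rightarrow> (int ^ ('n::finite)) set" where
  "supp f = f"

definition tadd :: "('n::finite) bpoly \<Rightarrow> ('n::finite) bpoly \<Rightarrow> ('n::finite) bpoly" where
  "tadd f g = f \<union> g"

text \<open>Tropical product: exponents add, no cancellation over B, so Minkowski sum.\<close>
definition tmult :: "('n::finite) bpoly \<Rightarrow> ('n::finite) bpoly \<Rightarrow> ('n::finite) bpoly" where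
  "tmult f g = {u + v | u v. u \<in> f \<and> v \<in> g}"

definition monomial :: "int ^ ('n::finite) \<Rightarrow> ('n::finite) bpoly" where
  "monomial u = {u}"

definition is_ideal :: "('n::finite) bpoly set \<Rightarrow> bool" where
  "is_ideal I \<longleftrightarrow> I \<noteq> {} \<and> (\<forall>f\<in>I. finite f) \<and>
     (\<forall>f\<in>I. \<forall>g\<in>I. tadd f g \<in> I) \<and>
     (\<forall>f\<in>I. \<forall>g. finite g \<longrightarrow> tmult g f \<in> I)"

definition tropical_ideal :: "('n::finite) bpoly set \<Rightarrow> bool" where
  "tropical_ideal I \<longleftrightarrow> is_ideal I \<and>
     (\<forall>f\<in>I. \<forall>g\<in>I. \<forall>u \<in> supp f \<inter> supp g. \<exists>h\<in>I.
        (supp f - supp g) \<union> (supp g - supp f) \<subseteq> supp h \<and>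
        supp h \<subseteq> (supp f \<union> supp g) - {u})"

definition mat_indep :: "('n::finite) bpoly set \<Rightarrow> (int ^ ('n::finite)) set \<Rightarrow> bool" where
  "mat_indep I A \<longleftrightarrow> \<not> (\<exists>f\<in>I. supp f \<noteq> {} \<and> supp f \<subseteq> A)"

definition mat_circuit :: "('n::finite) bpoly set \<Rightarrow> (int ^ ('n::finite)) set \<Rightarrow> bool" where
  "mat_circuit I C \<longleftrightarrow> \<not> mat_indep I C \<and> (\<forall>B. B \<subset> C \<longrightarrow> mat_indep I B)"

definition mat_rank_eq :: "('n::finite) bpoly set \<Rightarrow> nat \<Rightarrow> bool" where
  "mat_rank_eq I r \<longleftrightarrow> (\<exists>A. mat_indep I A \<and> finite A \<and> card A = r) \<and>
     (\<forall>A. mat_indep I A \<longrightarrow> finite A \<and> card A \<le> r)"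

definition zero_dim_degree :: "('n::finite) bpoly set \<Rightarrow> nat \<Rightarrow> bool" where
  "zero_dim_degree I r \<longleftrightarrow> tropical_ideal I \<and> mat_rank_eq I r"

definition min_support_polys :: "('n::finite) bpoly set \<Rightarrow> ('n::finite) bpoly set" where
  "min_support_polys I = {f \<in> I. mat_circuit I (supp f)}"

definition sublattice :: "(int ^ ('n::finite)) set \<Rightarrow> bool" where
  "sublattice L \<longleftrightarrow> 0 \<in> L \<and> (\<forall>u\<in>L. \<forall>v\<in>L. u + v \<in> L) \<and> (\<forall>u\<in>L. - u \<in> L)"

definition proper_sublattice :: "(int ^ ('n::finite)) set \<Rightarrow> bool" where
  "proper_sublattice L \<longleftrightarrow> sublattice L \<and> L \<noteq> UNIV"

end

theory Submission
  imports Defs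
begin


lemma sl_refl: "sublattice L \<Longrightarrow> x - x \<in> L" by (simp add: sublattice_def)
lemma sl_sym: assumes "sublattice L" "x - y \<in> L" shows "y - x \<in> L"
proof -
  have "y - x = - (x - y)" by simp
  thus ?thesis using assms unfolding sublattice_def by metis
qed
lemma sl_trans: assumes "sublattice L" "x - y \<in> L" "y - z \<in> L" shows "x - z \<in> L"
proof -
  have "x - z = (x - y) + (y - z)" by simp
  thus ?thesis using assms unfolding sublattice_def by metis
qed
lemma sl_nsym: "sublattice L \<Longrightarrow> x - y \<notin> L \<Longrightarrow> y - x \<notin> L"
  using sl_sym by blast

lemma three_sub:
  assumes "\<not> (finite A \<and> card A \<le> 2)"
  shows "\<exists>x y z. {x,y,z} \<subseteq> A \<and> x \<noteq> y \<and> y \<noteq> z \<and> x \<noteq> z"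
proof -
  obtain B where "B \<subseteq> A" "card B = 3"
  proof (cases "finite A")
    case True
    then have "3 \<le> card A" using assms by auto
    then show ?thesis using obtain_subset_with_card_n that by metis
  next
    case False
    then show ?thesis using infinite_arbitrarily_large that by metis
  qed
  then show ?thesis unfolding card_3_iff by blast
qed

definition circL :: "(int ^ ('n::finite)) set \<Rightarrow> 'n bpoly \<Rightarrow> bool" where
  "circL L C \<longleftrightarrow> (\<exists>u v. u \<noteq> v \<and> u - v \<in> L \<and> C = {u,v}) \<or>
     (\<exists>u v w. u \<noteq> v \<and> u \<noteq> w \<and> v \<noteq> w \<and> u - v \<notin> L \<and> u - w \<notin> L \<and> v - w \<notin> L \<and> C = {u,v,w})"

definition cw :: "(int ^ ('n::finite)) set \<Rightarrow> 'n bpoly \<Rightarrow> int ^ 'n \<Rightarrow> bool" where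
  "cw L S x \<longleftrightarrow> (\<exists>y\<in>S. y \<noteq> x \<and> x - y \<in> L) \<or>
     (\<exists>y\<in>S. \<exists>z\<in>S. x - y \<notin> L \<and> x - z \<notin> L \<and> y - z \<notin> L)"

definition IL :: "(int ^ ('n::finite)) set \<Rightarrow> 'n bpoly set" where
  "IL L = {f. finite f \<and> (\<forall>x\<in>f. cw L f x)}"

lemma cw_mono: "cw L S x \<Longrightarrow> S \<subseteq> T \<Longrightarrow> cw L T x"
  unfolding cw_def by blast

lemma circL_cw: assumes L: "sublattice L" and "circL L C" "x \<in> C" shows "cw L C x"
  using assms(2) unfolding circL_def
proof (elim disjE exE conjE)
  fix u v assume h: "u \<noteq> v" "u - v \<in> L" "C = {u,v}"
  have h2: "v - u \<in> L" using sl_sym[OF L h(2)] .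
  have "x = u \<or> x = v" using assms(3) h(3) by simp
  then show ?thesis
  proof
    assume "x = u" then show ?thesis unfolding cw_def using h by (intro disjI1 bexI[of _ v]) auto
  next
    assume "x = v" then show ?thesis unfolding cw_def using h h2 by (intro disjI1 bexI[of _ u]) auto
  qed
next
  fix u v w assume h: "u \<noteq> v" "u \<noteq> w" "v \<noteq> w" "u - v \<notin> L" "u - w \<notin> L" "v - w \<notin> L" "C = {u,v,w}"
  have s: "v - u \<notin> L" "w - u \<notin> L" "w - v \<notin> L"
    using sl_nsym[OF L h(4)] sl_nsym[OF L h(5)] sl_nsym[OF L h(6)] by auto
  have "x = u \<or> x = v \<or> x = w" using assms(3) h(7) by simp
  then show ?thesis
  proof (elim disjE)
    assume "x = u" then show ?thesis unfolding cw_def using h s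
      by (intro disjI2 bexI[of _ v] bexI[of _ w]) auto
  next
    assume "x = v" then show ?thesis unfolding cw_def using h s
      by (intro disjI2 bexI[of _ u] bexI[of _ w]) auto
  next
    assume "x = w" then show ?thesis unfolding cw_def using h s
      by (intro disjI2 bexI[of _ u] bexI[of _ v]) auto
  qed
qed

lemma cw_circL: assumes L: "sublattice L" and "x \<in> S" "cw L S x"
  shows "\<exists>C\<subseteq>S. x \<in> C \<and> circL L C"
  using assms(3) unfolding cw_def
proof (elim disjE bexE conjE)
  fix y assume h: "y \<in> S" "y \<noteq> x" "x - y \<in> L"
  have "circL L {x,y}" unfolding circL_def using h by (intro disjI1 exI[of _ x] exI[of _ y]) simp
  moreover have "{x,y} \<subseteq> S" using h assms(2) by simp
  ultimately show ?thesis by blast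
next
  fix y z assume h: "y \<in> S" "z \<in> S" "x - y \<notin> L" "x - z \<notin> L" "y - z \<notin> L"
  have "x \<noteq> y" "x \<noteq> z" "y \<noteq> z" using h sl_refl[OF L] by auto
  then have "circL L {x,y,z}" unfolding circL_def using h by (intro disjI2 exI[of _ x] exI[of _ y] exI[of _ z]) simp
  moreover have "{x,y,z} \<subseteq> S" using h assms(2) by simp
  ultimately show ?thesis by blast
qed

lemma circL_finite: "circL L C \<Longrightarrow> finite C" unfolding circL_def by auto

lemma circL_IL: "sublattice L \<Longrightarrow> circL L C \<Longrightarrow> C \<in> IL L"
  unfolding IL_def using circL_finite circL_cw by blast

lemma pairIL: assumes L: "sublattice L" and "u \<noteq> v" shows "{u,v} \<in> IL L \<longleftrightarrow> u - v \<in> L"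
proof
  assume "{u,v} \<in> IL L"
  then have "cw L {u,v} u" unfolding IL_def by blast
  then show "u - v \<in> L" unfolding cw_def using sl_refl[OF L] by auto
next
  assume "u - v \<in> L"
  then have "circL L {u,v}" using assms unfolding circL_def by blast
  then show "{u,v} \<in> IL L" using circL_IL L by blast
qed

lemma singleIL: assumes L: "sublattice L" shows "{x} \<notin> IL L"
  unfolding IL_def cw_def using sl_refl[OF L] by auto

lemma triIL: assumes L: "sublattice L" and "x - y \<notin> L" "x - z \<notin> L" "y - z \<notin> L"
  shows "{x,y,z} \<in> IL L"
proof -
  have "x \<noteq> y" "x \<noteq> z" "y \<noteq> z" using assms sl_refl[OF L] by auto
  then have "circL L {x,y,z}" using assms unfolding circL_def by blast
  then show ?thesis using circL_IL L by blast
qed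

lemma tri_diff: assumes L: "sublattice L" and "u-v\<notin>L" "u-w\<notin>L" "v-w\<notin>L"
  "a \<in> {u,v,w}" "b \<in> {u,v,w}" "a \<noteq> b" shows "a - b \<notin> L"
proof -
  have "v - u \<notin> L" "w - u \<notin> L" "w - v \<notin> L"
    using sl_nsym[OF L assms(2)] sl_nsym[OF L assms(3)] sl_nsym[OF L assms(4)] by auto
  then show ?thesis using assms by auto
qed

lemma circL_card: "circL L C \<Longrightarrow> card C = 2 \<or> card C = 3"
  unfolding circL_def by auto

lemma circL_anti: assumes L: "sublattice L" and D: "circL L D" and C: "circL L C" and "D \<subseteq> C"
  shows "D = C"
proof (cases "card D = card C")
  case True
  then show ?thesis using card_subset_eq circL_finite C assms(4) by metis
next
  case False
  have cd: "card D = 2 \<or> card D = 3" using circL_card[OF D] .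
  have cc: "card C = 2 \<or> card C = 3" using circL_card[OF C] .
  have "card D \<le> card C" using card_mono circL_finite C assms(4) by metis
  then have d2: "card D = 2" and c3: "card C = 3" using False cd cc by auto
  have "\<not> (\<exists>u v w. u \<noteq> v \<and> u \<noteq> w \<and> v \<noteq> w \<and> u - v \<notin> L \<and> u - w \<notin> L \<and> v - w \<notin> L \<and> D = {u,v,w})"
    using d2 by auto
  then obtain a b where ab: "D = {a,b}" "a - b \<in> L" "a \<noteq> b" using D unfolding circL_def by blast
  have "\<not> (\<exists>u v. u \<noteq> v \<and> u - v \<in> L \<and> C = {u,v})"
    using c3 by auto
  then obtain u v w where uvw: "u - v \<notin> L" "u - w \<notin> L" "v - w \<notin> L" "C = {u,v,w}"
    using C unfolding circL_def by blast
  have "a \<in> {u,v,w}" "b \<in> {u,v,w}" using ab assms(4) uvw(4) by auto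
  then have "a - b \<notin> L" using tri_diff[OF L uvw(1-3)] ab(3) by blast
  then show ?thesis using ab(2) by blast
qed

lemma indep_IL: assumes L: "sublattice L"
  shows "mat_indep (IL L) B \<longleftrightarrow> \<not> (\<exists>C\<subseteq>B. circL L C)"
proof
  assume a: "mat_indep (IL L) B"
  show "\<not> (\<exists>C\<subseteq>B. circL L C)"
  proof
    assume "\<exists>C\<subseteq>B. circL L C"
    then obtain C where C: "C \<subseteq> B" "circL L C" by blast
    have "C \<noteq> {}" using C(2) unfolding circL_def by auto
    then show False using a C circL_IL[OF L C(2)] unfolding mat_indep_def supp_def by blast
  qed
next
  assume h: "\<not> (\<exists>C\<subseteq>B. circL L C)"
  show "mat_indep (IL L) B" unfolding mat_indep_def supp_def
  proof
    assume "\<exists>f\<in>IL L. f \<noteq> {} \<and> f \<subseteq> B"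
    then obtain f x where "f \<in> IL L" "f \<subseteq> B" "x \<in> f" by blast
    then have "cw L f x" unfolding IL_def by blast
    then show False using cw_circL[OF L \<open>x \<in> f\<close>] h \<open>f \<subseteq> B\<close> by blast
  qed
qed

lemma circuit_IL: assumes L: "sublattice L"
  shows "f \<in> min_support_polys (IL L) \<longleftrightarrow> circL L f"
proof
  assume "f \<in> min_support_polys (IL L)"
  then have m: "mat_circuit (IL L) f" unfolding min_support_polys_def supp_def by blast
  then obtain D where D: "D \<subseteq> f" "circL L D" unfolding mat_circuit_def indep_IL[OF L] by blast
  show "circL L f"
  proof (cases "D = f")
    case True then show ?thesis using D by simp
  next
    case False
    then have "mat_indep (IL L) D" using m D unfolding mat_circuit_def by blast
    then show ?thesis using D indep_IL[OF L] by blast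
  qed
next
  assume c: "circL L f"
  have "mat_circuit (IL L) f" unfolding mat_circuit_def indep_IL[OF L]
    using c circL_anti[OF L] by blast
  then show "f \<in> min_support_polys (IL L)" unfolding min_support_polys_def supp_def
    using circL_IL[OF L c] by blast
qed



lemma cw_shift: assumes "cw L f b" shows "cw L ((\<lambda>x. a + x) ` f) (a + b)"
  using assms unfolding cw_def
proof (elim disjE bexE conjE)
  fix y assume h: "y \<in> f" "y \<noteq> b" "b - y \<in> L"
  have "a + y \<in> (\<lambda>x. a + x) ` f" "a + y \<noteq> a + b" "(a + b) - (a + y) \<in> L" using h by auto
  then show "(\<exists>y\<in>(\<lambda>x. a + x) ` f. y \<noteq> a + b \<and> a + b - y \<in> L) \<or>
    (\<exists>y\<in>(\<lambda>x. a + x) ` f. \<exists>z\<in>(\<lambda>x. a + x) ` f. a + b - y \<notin> L \<and> a + b - z \<notin> L \<and> y - z \<notin> L)"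
    by blast
next
  fix y z assume h: "y \<in> f" "z \<in> f" "b - y \<notin> L" "b - z \<notin> L" "y - z \<notin> L"
  have "a + y \<in> (\<lambda>x. a + x) ` f" "a + z \<in> (\<lambda>x. a + x) ` f"
    "(a + b) - (a + y) \<notin> L" "(a + b) - (a + z) \<notin> L" "(a + y) - (a + z) \<notin> L" using h by auto
  then show "(\<exists>y\<in>(\<lambda>x. a + x) ` f. y \<noteq> a + b \<and> a + b - y \<in> L) \<or>
    (\<exists>y\<in>(\<lambda>x. a + x) ` f. \<exists>z\<in>(\<lambda>x. a + x) ` f. a + b - y \<notin> L \<and> a + b - z \<notin> L \<and> y - z \<notin> L)"
    by blast
qed

lemma tmult_eq: "tmult g f = (\<Union>u\<in>g. \<Union>v\<in>f. {u + v})"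
  unfolding tmult_def by blast

lemma IL_ideal: assumes L: "sublattice L" shows "is_ideal (IL L)"
  unfolding is_ideal_def
proof (intro conjI ballI allI impI)
  show "IL L \<noteq> {}" unfolding IL_def by auto
next
  fix f assume "f \<in> IL L" then show "finite f" unfolding IL_def by auto
next
  fix f g assume "f \<in> IL L" "g \<in> IL L"
  then show "tadd f g \<in> IL L"
    unfolding IL_def tadd_def using cw_mono[of L f _ "f \<union> g"] cw_mono[of L g _ "f \<union> g"] by auto
next
  fix f g :: "'a bpoly" assume f: "f \<in> IL L" and g: "finite g"
  have ff: "finite f" using f unfolding IL_def by auto
  have fin: "finite (tmult g f)" unfolding tmult_eq using ff g by simp
  have "\<forall>p\<in>tmult g f. cw L (tmult g f) p"
  proof
    fix p assume "p \<in> tmult g f"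
    then obtain a b where ab: "a \<in> g" "b \<in> f" "p = a + b" unfolding tmult_def by blast
    have "cw L f b" using f ab unfolding IL_def by auto
    then have "cw L ((\<lambda>x. a + x) ` f) (a + b)" by (rule cw_shift)
    moreover have "(\<lambda>x. a + x) ` f \<subseteq> tmult g f" using ab(1) unfolding tmult_def by auto
    ultimately show "cw L (tmult g f) p" using cw_mono ab(3) by blast
  qed
  then show "tmult g f \<in> IL L" unfolding IL_def using fin by auto
qed

lemma elim_aux1:
  assumes L: "sublattice L" and cg: "cw L g u" and xg: "x \<notin> g"
    and h: "x - u \<notin> L" "x - z \<notin> L" "u - z \<notin> L" "z \<in> S" and gS: "g - {u} \<subseteq> S"
  shows "cw L S x"
  using cg unfolding cw_def[of L g u]
proof (elim disjE bexE conjE)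
  fix w assume w: "w \<in> g" "w \<noteq> u" "u - w \<in> L"
  have "x - w \<notin> L"
  proof
    assume "x - w \<in> L"
    moreover have "w - u \<in> L" using sl_sym[OF L w(3)] .
    ultimately have "x - u \<in> L" using sl_trans[OF L] by blast
    then show False using h by blast
  qed
  moreover have "w - z \<notin> L"
  proof
    assume "w - z \<in> L"
    then have "u - z \<in> L" using sl_trans[OF L w(3)] by blast
    then show False using h by blast
  qed
  moreover have "w \<in> S" using w gS by blast
  ultimately show ?thesis unfolding cw_def using h by blast
next
  fix p q assume pq: "p \<in> g" "q \<in> g" "u - p \<notin> L" "u - q \<notin> L" "p - q \<notin> L"
  have "p \<noteq> u" "q \<noteq> u" using pq sl_refl[OF L] by auto
  then have S: "p \<in> S" "q \<in> S" using pq gS by blast+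
  have "p \<noteq> x" "q \<noteq> x" using pq xg by blast+
  show ?thesis
  proof (cases "x - p \<in> L")
    case True then show ?thesis unfolding cw_def using S \<open>p \<noteq> x\<close> by blast
  next
    case False
    show ?thesis
    proof (cases "x - q \<in> L")
      case True then show ?thesis unfolding cw_def using S \<open>q \<noteq> x\<close> by blast
    next
      case False2: False
      show ?thesis unfolding cw_def using S False False2 pq(5) by blast
    qed
  qed
qed

lemma elim_cwA:
  assumes L: "sublattice L" and cg: "cw L g u" and xg: "x \<notin> g"
    and y: "y \<in> f" "y \<noteq> x" "x - y \<in> L"
  shows "cw L ((f \<union> g) - {u}) x"
proof (cases "y = u")
  case False then show ?thesis unfolding cw_def using y by blast
next
  case True
  then have xuL: "x - u \<in> L" using y by simp
  show ?thesis using cg unfolding cw_def[of L g u]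
  proof (elim disjE bexE conjE)
    fix w assume w: "w \<in> g" "w \<noteq> u" "u - w \<in> L"
    have "x - w \<in> L" using sl_trans[OF L xuL w(3)] .
    moreover have "w \<noteq> x" using w xg by blast
    ultimately show ?thesis unfolding cw_def using w by blast
  next
    fix p q assume pq: "p \<in> g" "q \<in> g" "u - p \<notin> L" "u - q \<notin> L" "p - q \<notin> L"
    have "p \<noteq> u" "q \<noteq> u" using pq sl_refl[OF L] by auto
    have ux: "u - x \<in> L" using sl_sym[OF L xuL] .
    have "x - p \<notin> L" using sl_trans[OF L ux] pq(3) by blast
    moreover have "x - q \<notin> L" using sl_trans[OF L ux] pq(4) by blast
    ultimately show ?thesis unfolding cw_def using pq \<open>p \<noteq> u\<close> \<open>q \<noteq> u\<close> by blast
  qed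
qed

lemma elim_cwB:
  assumes L: "sublattice L" and cg: "cw L g u" and xg: "x \<notin> g"
    and yz: "y \<in> f" "z \<in> f" "x - y \<notin> L" "x - z \<notin> L" "y - z \<notin> L"
  shows "cw L ((f \<union> g) - {u}) x"
proof -
  have gS: "g - {u} \<subseteq> (f \<union> g) - {u}" by blast
  show ?thesis
  proof (cases "y = u")
    case True
    have "z \<noteq> u" using yz True sl_refl[OF L] by auto
    then have zS: "z \<in> (f \<union> g) - {u}" using yz by blast
    have "x - u \<notin> L" "u - z \<notin> L" using yz True by auto
    then show ?thesis using elim_aux1[OF L cg xg _ yz(4) _ zS gS] by blast
  next
    case yu: False
    show ?thesis
    proof (cases "z = u")
      case True
      have yS: "y \<in> (f \<union> g) - {u}" using yz yu by blast
      have "u - y \<notin> L" using sl_nsym[OF L yz(5)] True by simp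
      moreover have "x - u \<notin> L" using yz True by simp
      ultimately show ?thesis using elim_aux1[OF L cg xg _ yz(3) _ yS gS] by blast
    next
      case False
      then show ?thesis unfolding cw_def using yz yu by blast
    qed
  qed
qed

lemma elim_cw:
  assumes L: "sublattice L" and cf: "cw L f x" and cg: "cw L g u" and xg: "x \<notin> g"
  shows "cw L ((f \<union> g) - {u}) x"
  using cf unfolding cw_def[of L f x]
proof (elim disjE bexE conjE)
  fix y assume "y \<in> f" "y \<noteq> x" "x - y \<in> L"
  then show ?thesis by (rule elim_cwA[OF L cg xg])
next
  fix y z assume "y \<in> f" "z \<in> f" "x - y \<notin> L" "x - z \<notin> L" "y - z \<notin> L"
  then show ?thesis by (rule elim_cwB[OF L cg xg])
qed

lemma IL_trop: assumes L: "sublattice L" shows "tropical_ideal (IL L)"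
  unfolding tropical_ideal_def
proof (intro conjI ballI)
  show "is_ideal (IL L)" using IL_ideal[OF L] .
next
  fix f g u assume f: "f \<in> IL L" and g: "g \<in> IL L" and u: "u \<in> supp f \<inter> supp g"
  define S where "S = (f \<union> g) - {u}"
  define h where "h = {y \<in> S. cw L S y}"
  have finS: "finite S" using f g unfolding S_def IL_def by auto
  have "h \<in> IL L" unfolding IL_def
  proof (intro CollectI conjI ballI)
    show "finite h" using finS unfolding h_def by auto
  next
    fix y assume "y \<in> h"
    then have "y \<in> S" "cw L S y" unfolding h_def by auto
    then obtain C where C: "C \<subseteq> S" "y \<in> C" "circL L C" using cw_circL[OF L] by blast
    have "C \<subseteq> h" unfolding h_def using C circL_cw[OF L C(3)] cw_mono by blast
    then show "cw L h y" using circL_cw[OF L C(3) C(2)] cw_mono by blast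
  qed
  moreover have "(supp f - supp g) \<union> (supp g - supp f) \<subseteq> supp h"
  proof
    fix x assume x: "x \<in> (supp f - supp g) \<union> (supp g - supp f)"
    have uf: "u \<in> f" "u \<in> g" using u unfolding supp_def by auto
    show "x \<in> supp h"
    proof (cases "x \<in> f")
      case True
      then have xg: "x \<notin> g" using x unfolding supp_def by auto
      then have "x \<noteq> u" using uf by auto
      have "cw L f x" "cw L g u" using f g True uf unfolding IL_def by auto
      then have "cw L S x" unfolding S_def using elim_cw[OF L _ _ xg] by blast
      then show ?thesis unfolding supp_def h_def S_def using True \<open>x \<noteq> u\<close> by auto
    next
      case False
      then have xg: "x \<in> g" "x \<notin> f" using x unfolding supp_def by auto
      then have "x \<noteq> u" using uf by auto
      have "cw L g x" "cw L f u" using f g xg uf unfolding IL_def by auto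
      then have "cw L ((g \<union> f) - {u}) x" using elim_cw[OF L _ _ xg(2)] by blast
      then have "cw L S x" unfolding S_def by (simp add: Un_commute)
      then show ?thesis unfolding supp_def h_def S_def using xg \<open>x \<noteq> u\<close> by auto
    qed
  qed
  moreover have "supp h \<subseteq> (supp f \<union> supp g) - {u}" unfolding supp_def h_def S_def by auto
  ultimately show "\<exists>h\<in>IL L. (supp f - supp g) \<union> (supp g - supp f) \<subseteq> supp h \<and>
        supp h \<subseteq> (supp f \<union> supp g) - {u}" by blast
qed

lemma sub2_cases: "C \<subseteq> {a,b} \<Longrightarrow> C = {} \<or> C = {a} \<or> C = {b} \<or> C = {a,b}"
  by blast

lemma dep_of: "f \<in> I \<Longrightarrow> f \<noteq> {} \<Longrightarrow> f \<subseteq> A \<Longrightarrow> \<not> mat_indep I A"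
  unfolding mat_indep_def supp_def by blast

lemma IL_bound: assumes sl: "sublattice L" and A: "mat_indep (IL L) A"
  shows "finite A \<and> card A \<le> 2"
proof (rule ccontr)
  assume "\<not> (finite A \<and> card A \<le> 2)"
  then have "\<exists>x y z. {x,y,z} \<subseteq> A \<and> x \<noteq> y \<and> y \<noteq> z \<and> x \<noteq> z" by (rule three_sub)
  then obtain x y z where xyz: "{x,y,z} \<subseteq> A" "x \<noteq> y" "y \<noteq> z" "x \<noteq> z" by blast
  have s1: "{x,y} \<subseteq> A" "{x,z} \<subseteq> A" "{y,z} \<subseteq> A" using xyz(1) by auto
  show False
  proof (cases "x - y \<in> L")
    case True
    then have "{x,y} \<in> IL L" using pairIL[OF sl xyz(2)] by simp
    then show False using dep_of[OF _ _ s1(1)] A by blast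
  next
    case F1: False
    show False
    proof (cases "x - z \<in> L")
      case True
      then have "{x,z} \<in> IL L" using pairIL[OF sl xyz(4)] by simp
      then show False using dep_of[OF _ _ s1(2)] A by blast
    next
      case F2: False
      show False
      proof (cases "y - z \<in> L")
        case True
        then have "{y,z} \<in> IL L" using pairIL[OF sl xyz(3)] by simp
        then show False using dep_of[OF _ _ s1(3)] A by blast
      next
        case F3: False
        have "{x,y,z} \<in> IL L" using triIL[OF sl F1 F2 F3] .
        then show False using dep_of[OF _ _ xyz(1)] A by blast
      qed
    qed
  qed
qed

lemma IL_rank: assumes L: "proper_sublattice L" shows "mat_rank_eq (IL L) 2"
proof -
  have sl: "sublattice L" using L unfolding proper_sublattice_def by auto
  obtain d where d: "d \<notin> L" using L unfolding proper_sublattice_def by auto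
  have d0: "d \<noteq> 0" using d sl unfolding sublattice_def by auto
  have n0d: "{0,d} \<notin> IL L"
  proof
    assume "{0,d} \<in> IL L"
    then have "0 - d \<in> L" using pairIL[OF sl, of 0 d] d0 by simp
    then have "d - 0 \<in> L" using sl_sym[OF sl] by blast
    then show False using d by simp
  qed
  have ind: "mat_indep (IL L) {0, d}" unfolding mat_indep_def supp_def
  proof
    assume "\<exists>f\<in>IL L. f \<noteq> {} \<and> f \<subseteq> {0, d}"
    then obtain f where f: "f \<in> IL L" "f \<noteq> {}" "f \<subseteq> {0,d}" by blast
    then have "f = {0} \<or> f = {d} \<or> f = {0,d}" using sub2_cases by blast
    then show False using f(1) n0d singleIL[OF sl, of 0] singleIL[OF sl, of d] by blast
  qed
  have "card {0, d} = 2" using d0 by simp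
  then show ?thesis unfolding mat_rank_eq_def using ind IL_bound[OF sl] by blast
qed

lemma IL_zero: "proper_sublattice L \<Longrightarrow> zero_dim_degree (IL L) 2"
  unfolding zero_dim_degree_def using IL_trop IL_rank proper_sublattice_def by blast



definition LoI :: "('n::finite) bpoly set \<Rightarrow> (int ^ 'n) set" where
  "LoI I = {d. d = 0 \<or> {0,d} \<in> I}"

context
  fixes I :: "('n::finite) bpoly set"
  assumes Z: "zero_dim_degree I 2"
begin

lemma TI: "tropical_ideal I" using Z unfolding zero_dim_degree_def by blast
lemma RI: "mat_rank_eq I 2" using Z unfolding zero_dim_degree_def by blast
lemma II: "is_ideal I" using TI unfolding tropical_ideal_def by blast
lemma finI: "f \<in> I \<Longrightarrow> finite f" using II unfolding is_ideal_def by blast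

lemma shiftI: assumes "f \<in> I" shows "(\<lambda>x. a + x) ` f \<in> I"
proof -
  have "tmult {a} f = (\<lambda>x. a + x) ` f" unfolding tmult_def by blast
  moreover have "tmult {a} f \<in> I" using II assms unfolding is_ideal_def by blast
  ultimately show ?thesis by simp
qed

lemma emptyI: "{} \<in> I"
proof -
  obtain f where "f \<in> I" using II unfolding is_ideal_def by blast
  moreover have "tmult {} f = {}" unfolding tmult_def by blast
  ultimately show ?thesis using II unfolding is_ideal_def by (metis finite.emptyI)
qed

lemma unI: "f \<in> I \<Longrightarrow> g \<in> I \<Longrightarrow> f \<union> g \<in> I"
  using II unfolding is_ideal_def tadd_def by blast

lemma UnionI: "finite F \<Longrightarrow> F \<subseteq> I \<Longrightarrow> \<Union>F \<in> I"
proof (induction rule: finite_induct)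
  case empty then show ?case using emptyI by simp
next
  case (insert f F) then show ?case using unI by simp
qed

lemma boundI: "mat_indep I A \<Longrightarrow> finite A \<and> card A \<le> 2"
  using RI unfolding mat_rank_eq_def by blast

lemma ex2: "\<exists>A. mat_indep I A \<and> card A = 2"
  using RI unfolding mat_rank_eq_def by blast

lemma elimI: "f \<in> I \<Longrightarrow> g \<in> I \<Longrightarrow> u \<in> f \<Longrightarrow> u \<in> g \<Longrightarrow>
   \<exists>h\<in>I. (f - g) \<union> (g - f) \<subseteq> h \<and> h \<subseteq> (f \<union> g) - {u}"
  using TI unfolding tropical_ideal_def supp_def by blast

lemma no_single: "{x} \<notin> I"
proof
  assume x: "{x} \<in> I"
  obtain A where A: "mat_indep I A" "card A = 2" using ex2 by blast
  then obtain y where y: "y \<in> A" by fastforce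
  have "(\<lambda>z. (y - x) + z) ` {x} = {y}" by simp
  then have "{y} \<in> I" using shiftI[OF x, of "y - x"] by simp
  then show False using dep_of[of "{y}" I A] A y by blast
qed

lemma pairI: assumes uv: "u \<noteq> v" shows "{u,v} \<in> I \<longleftrightarrow> u - v \<in> LoI I"
proof
  assume a: "{u,v} \<in> I"
  have "(\<lambda>z. (- v) + z) ` {u,v} = {0, u - v}" by (simp add: insert_commute)
  then have "{0, u - v} \<in> I" using shiftI[OF a, of "- v"] by simp
  then show "u - v \<in> LoI I" unfolding LoI_def by blast
next
  assume a: "u - v \<in> LoI I"
  have "u - v \<noteq> 0" using uv by simp
  then have b: "{0, u - v} \<in> I" using a unfolding LoI_def by blast
  have "(\<lambda>z. v + z) ` {0, u - v} = {u, v}" by (simp add: insert_commute)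
  then show "{u,v} \<in> I" using shiftI[OF b, of v] by simp
qed

lemma LI_sub: "sublattice (LoI I)"
  unfolding sublattice_def
proof (intro conjI ballI)
  show "0 \<in> LoI I" unfolding LoI_def by simp
next
  fix d assume d: "d \<in> LoI I"
  show "- d \<in> LoI I"
  proof (cases "d = 0")
    case True then show ?thesis unfolding LoI_def by simp
  next
    case False
    then have "{0,d} \<in> I" using d unfolding LoI_def by blast
    then have "0 - d \<in> LoI I" using pairI[of 0 d] False by simp
    then show ?thesis by simp
  qed
next
  fix a b assume a: "a \<in> LoI I" and b: "b \<in> LoI I"
  show "a + b \<in> LoI I"
  proof (cases "a = 0")
    case True then show ?thesis using b by simp
  next
    case a0: False
    show ?thesis
    proof (cases "b = 0")
      case True then show ?thesis using a by simp
    next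
      case b0: False
      show ?thesis
      proof (cases "a + b = 0")
        case True then show ?thesis unfolding LoI_def by simp
      next
        case ab0: False
    have ne: "a \<noteq> 0" "b \<noteq> 0" "a + b \<noteq> 0" "a + b \<noteq> a" using a0 b0 ab0 by simp_all
    have f: "{a,0} \<in> I" using pairI[of a 0] ne a by simp
    have g: "{a+b,a} \<in> I" using pairI[of "a+b" a] ne b by simp
    obtain h where h: "h \<in> I" "({a,0} - {a+b,a}) \<union> ({a+b,a} - {a,0}) \<subseteq> h"
      "h \<subseteq> ({a,0} \<union> {a+b,a}) - {a}"
      using elimI[OF f g, of a] by auto
    have "0 \<in> {a,0} - {a+b,a}" using ne by auto
    moreover have "a + b \<in> {a+b,a} - {a,0}" using ne by auto
    ultimately have s1: "{0, a+b} \<subseteq> h" using h(2) by blast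
    have s2: "h \<subseteq> {0, a+b}" using h(3) by blast
    have "h = {0, a+b}" using s1 s2 by blast
    then show ?thesis using h(1) unfolding LoI_def by blast
  qed
  qed
  qed
qed

lemma LI_proper: "proper_sublattice (LoI I)"
  unfolding proper_sublattice_def
proof (intro conjI)
  show "sublattice (LoI I)" by (rule LI_sub)
  show "LoI I \<noteq> UNIV"
  proof
    assume U: "LoI I = UNIV"
    obtain A where A: "mat_indep I A" "card A = 2" using ex2 by blast
    then obtain p q where pq: "A = {p,q}" "p \<noteq> q" unfolding card_2_iff by blast
    have "{p,q} \<in> I" using pairI[OF pq(2)] U by simp
    then show False using dep_of[of "{p,q}" I A] A pq by blast
  qed
qed

lemma I_sub_cw: assumes f: "f \<in> I" and x: "x \<in> f" shows "cw (LoI I) f x"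
proof -
  define P where "P g \<longleftrightarrow> g \<in> I \<and> x \<in> g \<and> g \<subseteq> f" for g
  have "P f" unfolding P_def using f x by blast
  then obtain g where g: "P g" and gmin: "\<And>g'. P g' \<Longrightarrow> card g \<le> card g'"
    using ex_has_least_nat[of P f card] by blast
  have gI: "g \<in> I" "x \<in> g" "g \<subseteq> f" using g unfolding P_def by auto
  have fing: "finite g" using finI[OF gI(1)] .
  have minimal: False if h: "h \<in> I" "h \<noteq> {}" "h \<subset> g" for h
  proof (cases "x \<in> h")
    case True
    then have "P h" unfolding P_def using h gI by blast
    moreover have "card h < card g" using psubset_card_mono[OF fing h(3)] .
    ultimately show False using gmin by fastforce
  next
    case False
    obtain y where y: "y \<in> h" using h(2) by blast
    have yg: "y \<in> g" using y h(3) by blast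
    obtain h' where h': "h' \<in> I" "(g - h) \<union> (h - g) \<subseteq> h'" "h' \<subseteq> (g \<union> h) - {y}"
      using elimI[OF gI(1) h(1) yg y] by blast
    have "h' \<subseteq> g - {y}" using h'(3) h(3) by blast
    then have sub: "h' \<subset> g" using yg by blast
    have "x \<in> h'" using h'(2) gI(2) False by blast
    then have "P h'" unfolding P_def using h'(1) sub gI(3) by blast
    moreover have "card h' < card g" using psubset_card_mono[OF fing sub] .
    ultimately show False using gmin by fastforce
  qed
  have sl: "sublattice (LoI I)" by (rule LI_sub)
  have "circL (LoI I) g"
  proof -
    have c0: "card g \<noteq> 0" using fing gI(2) by auto
    consider "card g = 1" | "card g = 2" | "card g \<ge> 3" using c0 by linarith
    then show ?thesis
    proof cases
      case 1
      then obtain a where "g = {a}" using card_1_singletonE by blast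
      then show ?thesis using gI(1) no_single by simp
    next
      case 2
      then obtain a b where ab: "g = {a,b}" "a \<noteq> b" unfolding card_2_iff by blast
      then have "a - b \<in> LoI I" using pairI[OF ab(2)] gI(1) by simp
      then show ?thesis unfolding circL_def using ab by blast
    next
      case 3
      then obtain B where B: "B \<subseteq> g" "card B = 3" "finite B" using obtain_subset_with_card_n by metis
      have "\<not> mat_indep I B" using boundI B(2) by fastforce
      then obtain h where h: "h \<in> I" "h \<noteq> {}" "h \<subseteq> B" unfolding mat_indep_def supp_def by blast
      have "\<not> h \<subset> g" using minimal h by blast
      then have "g = B" using h(3) B(1) by blast
      then obtain a b c where abc: "g = {a,b,c}" "a \<noteq> b" "b \<noteq> c" "a \<noteq> c"
        using B(2) unfolding card_3_iff by blast
      have "{a,b} \<subset> g" using abc by auto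
      then have "{a,b} \<notin> I" using minimal[of "{a,b}"] by blast
      then have 1: "a - b \<notin> LoI I" using pairI[OF abc(2)] by simp
      have "{a,c} \<subset> g" using abc by auto
      then have "{a,c} \<notin> I" using minimal[of "{a,c}"] by blast
      then have 2: "a - c \<notin> LoI I" using pairI[OF abc(4)] by simp
      have "{b,c} \<subset> g" using abc by auto
      then have "{b,c} \<notin> I" using minimal[of "{b,c}"] by blast
      then have 3: "b - c \<notin> LoI I" using pairI[OF abc(3)] by simp
      show ?thesis unfolding circL_def using abc 1 2 3 by blast
    qed
  qed
  then have "cw (LoI I) g x" using circL_cw[OF sl _ gI(2)] by blast
  then show ?thesis using cw_mono gI(3) by blast
qed

lemma circ_inI: assumes C: "circL (LoI I) C" shows "C \<in> I"
  using C unfolding circL_def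
proof (elim disjE exE conjE)
  fix u v assume "u \<noteq> v" "u - v \<in> LoI I" "C = {u,v}"
  then show ?thesis using pairI by simp
next
  fix u v w assume h: "u \<noteq> v" "u \<noteq> w" "v \<noteq> w" "u - v \<notin> LoI I" "u - w \<notin> LoI I" "v - w \<notin> LoI I" "C = {u,v,w}"
  have "card C = 3" using h by simp
  then have "\<not> mat_indep I C" using boundI by fastforce
  then obtain k where k: "k \<in> I" "k \<noteq> {}" "k \<subseteq> C" unfolding mat_indep_def supp_def by blast
  have sub2: "a \<noteq> b \<and> a - b \<in> LoI I" if "k \<subseteq> {a,b}" for a b
  proof -
    have "k = {a} \<or> k = {b} \<or> k = {a,b}" using sub2_cases[OF that] k(2) by blast
    then have kk: "k = {a,b}" "a \<noteq> b" using k(1) no_single by auto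
    then show ?thesis using pairI[OF kk(2)] k(1) by simp
  qed
  have "u \<in> k"
  proof (rule ccontr)
    assume "u \<notin> k" then have "k \<subseteq> {v,w}" using k(3) h(7) by blast
    then show False using sub2 h by blast
  qed
  moreover have "v \<in> k"
  proof (rule ccontr)
    assume "v \<notin> k" then have "k \<subseteq> {u,w}" using k(3) h(7) by blast
    then show False using sub2 h by blast
  qed
  moreover have "w \<in> k"
  proof (rule ccontr)
    assume "w \<notin> k" then have "k \<subseteq> {u,v}" using k(3) h(7) by blast
    then show False using sub2 h by blast
  qed
  ultimately have "k = C" using k(3) h(7) by blast
  then show ?thesis using k(1) by simp
qed

lemma I_eq: "I = IL (LoI I)"
proof
  show "I \<subseteq> IL (LoI I)" unfolding IL_def using finI I_sub_cw by blast
next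
  show "IL (LoI I) \<subseteq> I"
  proof
    fix f assume f: "f \<in> IL (LoI I)"
    have ff: "finite f" using f unfolding IL_def by blast
    have "\<forall>x\<in>f. \<exists>C. C \<subseteq> f \<and> x \<in> C \<and> circL (LoI I) C"
      using f cw_circL[OF LI_sub] unfolding IL_def by blast
    then obtain Cf where Cf: "\<And>x. x \<in> f \<Longrightarrow> Cf x \<subseteq> f \<and> x \<in> Cf x \<and> circL (LoI I) (Cf x)"
      by metis
    have "f = \<Union>(Cf ` f)" using Cf by blast
    moreover have "\<Union>(Cf ` f) \<in> I" using UnionI[of "Cf ` f"] ff Cf circ_inI by blast
    ultimately show "f \<in> I" by simp
  qed
qed

end

lemma IL_inj: "inj_on IL {L :: (int ^ ('n::finite)) set. proper_sublattice L}"
proof (rule inj_onI)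
  fix L1 L2 :: "(int ^ 'n) set"
  assume L1: "L1 \<in> {L. proper_sublattice L}" and L2: "L2 \<in> {L. proper_sublattice L}"
    and eq: "IL L1 = IL L2"
  have s1: "sublattice L1" and s2: "sublattice L2" using L1 L2 unfolding proper_sublattice_def by auto
  show "L1 = L2"
  proof (rule set_eqI)
    fix d
    show "d \<in> L1 \<longleftrightarrow> d \<in> L2"
    proof (cases "d = 0")
      case True then show ?thesis using s1 s2 unfolding sublattice_def by simp
    next
      case False
      have "d \<in> L1 \<longleftrightarrow> {d,0} \<in> IL L1" using pairIL[OF s1 False] by simp
      also have "\<dots> \<longleftrightarrow> {d,0} \<in> IL L2" using eq by simp
      also have "\<dots> \<longleftrightarrow> d \<in> L2" using pairIL[OF s2 False] by simp
      finally show ?thesis .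
    qed
  qed
qed

lemma un2: "{u} \<union> {v} = {u,v}" by auto
lemma un3: "{u} \<union> {v} \<union> {w} = {u,v,w}" by auto
lemma un4: "{u,v} \<union> {w} = {u,v,w}" by auto

theorem main_aux:
  "\<exists>\<Phi> :: (int ^ 'n) set \<Rightarrow> 'n bpoly set.
     bij_betw \<Phi> {L. proper_sublattice L} {I. zero_dim_degree I 2} \<and>
     (\<forall>L. proper_sublattice L \<longrightarrow>
        (\<forall>f. f \<in> min_support_polys (\<Phi> L) \<longleftrightarrow>
           (\<exists>u v. u \<noteq> v \<and> u - v \<in> L \<and> f = tadd (monomial u) (monomial v)) \<or>
           (\<exists>u v w. u \<noteq> v \<and> u \<noteq> w \<and> v \<noteq> w \<and>
              u - v \<notin> L \<and> u - w \<notin> L \<and> v - w \<notin> L \<and>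
              f = tadd (tadd (monomial u) (monomial v)) (monomial w))))"
proof (intro exI[of _ IL] conjI allI impI)
  show "bij_betw IL {L :: (int ^ 'n) set. proper_sublattice L} {I. zero_dim_degree I 2}"
    unfolding bij_betw_def
  proof
    show "inj_on IL {L :: (int ^ 'n) set. proper_sublattice L}" by (rule IL_inj)
  next
    show "IL ` {L :: (int ^ 'n) set. proper_sublattice L} = {I. zero_dim_degree I 2}"
    proof
      show "IL ` {L :: (int ^ 'n) set. proper_sublattice L} \<subseteq> {I. zero_dim_degree I 2}" using IL_zero by blast
    next
      show "{I. zero_dim_degree I 2} \<subseteq> IL ` {L :: (int ^ 'n) set. proper_sublattice L}"
      proof
        fix I :: "'n bpoly set" assume "I \<in> {I. zero_dim_degree I 2}"
        then have Z: "zero_dim_degree I 2" by simp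
        then show "I \<in> IL ` {L :: (int ^ 'n) set. proper_sublattice L}"
          using I_eq[OF Z] LI_proper[OF Z] by blast
      qed
    qed
  qed
next
  fix L :: "(int ^ 'n) set" and f assume L: "proper_sublattice L"
  have sl: "sublattice L" using L unfolding proper_sublattice_def by auto
  have e: "((\<exists>u v. u \<noteq> v \<and> u - v \<in> L \<and> f = tadd (monomial u) (monomial v)) \<or>
           (\<exists>u v w. u \<noteq> v \<and> u \<noteq> w \<and> v \<noteq> w \<and>
              u - v \<notin> L \<and> u - w \<notin> L \<and> v - w \<notin> L \<and>
              f = tadd (tadd (monomial u) (monomial v)) (monomial w))) \<longleftrightarrow> circL L f"
    unfolding circL_def tadd_def monomial_def un3 un2 un4 by (rule refl)
  show "f \<in> min_support_polys (IL L) \<longleftrightarrow>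
           (\<exists>u v. u \<noteq> v \<and> u - v \<in> L \<and> f = tadd (monomial u) (monomial v)) \<or>
           (\<exists>u v w. u \<noteq> v \<and> u \<noteq> w \<and> v \<noteq> w \<and>
              u - v \<notin> L \<and> u - w \<notin> L \<and> v - w \<notin> L \<and>
              f = tadd (tadd (monomial u) (monomial v)) (monomial w))"
    using e circuit_IL[OF sl] by simp
qed


theorem mainTheorem5:
  "\<exists>\<Phi> :: (int ^ 'n) set \<Rightarrow> 'n bpoly set.
     bij_betw \<Phi> {L. proper_sublattice L} {I. zero_dim_degree I 2} \<and>
     (\<forall>L. proper_sublattice L \<longrightarrow>
        (\<forall>f. f \<in> min_support_polys (\<Phi> L) \<longleftrightarrow>
           (\<exists>u v. u \<noteq> v \<and> u - v \<in> L \<and> f = tadd (monomial u) (monomial v)) \<or>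
           (\<exists>u v w. u \<noteq> v \<and> u \<noteq> w \<and> v \<noteq> w \<and>
              u - v \<notin> L \<and> u - w \<notin> L \<and> v - w \<notin> L \<and>
              f = tadd (tadd (monomial u) (monomial v)) (monomial w))))"
  by (rule main_aux)

end
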